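(* Let $n\ge 3$ and let $(\alpha,\beta)$ satisfy $\beta\ge 0$, $0<\alpha+\beta<n-\beta$ and $\frac{n-\alpha-2\beta}{2n}+\frac{n-\alpha}{2(n-1)}<1$. Let $\varphi\in C^1_c(\mathbb R^{n-1})$ and fix $0<\theta<\min\{1,\beta+\frac1q\}$. Then for all $f\in L^p(\mathbb R^{n-1})$ and all $x_n>0$, $$\big\|\varphi(\cdot)E_{\alpha,\beta}(f)(\cdot,x_n)-E_{\alpha,\beta}(\varphi f)(\cdot,x_n)\big\|_{L^q(\mathbb R^{n-1})}\lesssim x_n^{\theta-\frac1q}\|\varphi\|_{C^1(\mathbb R^{n-1})}\|f\|_{L^p(\mathbb R^{n-1})},$$ with implied constant depending only on $n,\alpha,\beta,\theta$.
   Context: $p=\frac{2(n-1)}{n+\alpha-2}$, $q=\frac{2n}{n-\alpha-2\beta}$. For $f$ on $\mathbb R^{n-1}$ and $(x',x_n)\in\mathbb R^{n-1}\times(0,\infty)$, $E_{\alpha,\beta}(f)(x',x_n)=\int_{\mathbb R^{n-1}}\frac{x_n^\beta f(y')}{(x_n^2+|x'-y'|^2)^{\frac{n-\alpha}{2}}}\,\mathrm dy'$. $\|\varphi\|_{C^1}=\|\varphi\|_{L^\infty}+\|\nabla\varphi\|_{L^\infty}$. *)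

theory Defs
  imports "HOL-Analysis.Analysis"
begin

text \<open>Euclidean space R^(n-1) is modelled by a type 'a :: euclidean_space with
  DIM('a) = n - 1, carrying Lebesgue measure.\<close>

definition has_compact_support :: "('a::euclidean_space \<Rightarrow> real) \<Rightarrow> bool" where
  "has_compact_support \<phi> \<longleftrightarrow> (\<exists>K. compact K \<and> (\<forall>x. x \<notin> K \<longrightarrow> \<phi> x = 0))"

definition in_Lp :: "real \<Rightarrow> ('a::euclidean_space \<Rightarrow> real) \<Rightarrow> bool" where
  "in_Lp r g \<longleftrightarrow> g \<in> borel_measurable lebesgue \<and>
     (\<integral>\<^sup>+ x. ennreal (\<bar>g x\<bar> powr r) \<partial>lebesgue) < \<infinity>"

definition Lp_norm :: "real \<Rightarrow> ('a::euclidean_space \<Rightarrow> real) \<Rightarrow> real" where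
  "Lp_norm r g = enn2real (\<integral>\<^sup>+ x. ennreal (\<bar>g x\<bar> powr r) \<partial>lebesgue) powr (1 / r)"

text \<open>C^1 norm: sup norm of phi plus sup of the (operator = Euclidean) norm of its derivative.\<close>
definition C1_norm :: "('a::euclidean_space \<Rightarrow> real) \<Rightarrow> ('a \<Rightarrow> ('a \<Rightarrow>\<^sub>L real)) \<Rightarrow> real" where
  "C1_norm \<phi> \<phi>' = (SUP x. \<bar>\<phi> x\<bar>) + (SUP x. norm (\<phi>' x))"

text \<open>E_{alpha,beta}(f)(x', t) with n = DIM('a) + 1.\<close>
definition E_op :: "real \<Rightarrow> real \<Rightarrow> ('a::euclidean_space \<Rightarrow> real) \<Rightarrow> 'a \<Rightarrow> real \<Rightarrow> real" where
  "E_op \<alpha> \<beta> f x t = (\<integral> y. t powr \<beta> * f y /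
      (t\<^sup>2 + (norm (x - y))\<^sup>2) powr ((real DIM('a) + 1 - \<alpha>) / 2) \<partial>lebesgue)"

end

theory Submission
  imports Defs
begin


lemma amgm2:
  fixes a b u v :: real
  assumes "a \<ge> 0" "b \<ge> 0" "u \<ge> 0" "v \<ge> 0" "u + v = 1"
  shows "a powr u * b powr v \<le> u * a + v * b"
proof (cases "a = 0 \<or> b = 0")
  case True
  then show ?thesis using assms by auto
next
  case False
  then show ?thesis using Youngs_inequality_0[of u v a b] assms by auto
qed

lemma amgm3:
  fixes a b c u v w :: real
  assumes "a \<ge> 0" "b \<ge> 0" "c \<ge> 0" "u > 0" "v > 0" "w > 0" "u + v + w = 1"
  shows "a powr u * b powr v * c powr w \<le> u * a + v * b + w * c"
proof -
  define m where "m = b powr (v/(v+w)) * c powr (w/(v+w))"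
  have m0: "m \<ge> 0" unfolding m_def by simp
  have "m \<le> (v/(v+w)) * b + (w/(v+w)) * c"
    unfolding m_def using assms by (intro amgm2) (auto simp: add_divide_distrib[symmetric])
  have "m powr (v+w) = b powr v * c powr w"
  proof -
    have vw: "v + w \<noteq> 0" using assms by auto
    have "m powr (v+w) = (b powr (v/(v+w))) powr (v+w) * (c powr (w/(v+w))) powr (v+w)"
      unfolding m_def by (simp add: powr_mult)
    also have "\<dots> = b powr v * c powr w" using vw by (simp add: powr_powr)
    finally show ?thesis .
  qed
  then have "a powr u * b powr v * c powr w = a powr u * m powr (v + w)" by simp
  also have "\<dots> \<le> u * a + (v+w) * m"
    using assms m0 by (intro amgm2) auto
  also have "\<dots> \<le> u * a + (v+w) * ((v/(v+w)) * b + (w/(v+w)) * c)"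
    using \<open>m \<le> _\<close> assms by (intro add_left_mono mult_left_mono) auto
  also have "\<dots> = u * a + v * b + w * c"
  proof -
    have "v + w \<noteq> 0" using assms by auto
    then show ?thesis by (simp add: distrib_left)
  qed
  finally show ?thesis .
qed



lemma nn_zero_AE_real:
  fixes F :: "'b \<Rightarrow> real"
  assumes [measurable]: "F \<in> borel_measurable M" and nn: "\<And>x. F x \<ge> 0"
    and I: "(\<integral>\<^sup>+x. ennreal (F x) \<partial>M) = 0"
  shows "AE x in M. F x = 0"
proof -
  have "AE x in M. ennreal (F x) = 0" using I by (subst (asm) nn_integral_0_iff_AE) auto
  then show ?thesis using nn by (auto elim!: eventually_mono simp: ennreal_eq_0_iff intro: antisym)
qed

lemma holder3:
  fixes F G H :: "'b \<Rightarrow> real"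
  assumes [measurable]: "F \<in> borel_measurable M" "G \<in> borel_measurable M" "H \<in> borel_measurable M"
    and nn: "\<And>x. F x \<ge> 0" "\<And>x. G x \<ge> 0" "\<And>x. H x \<ge> 0"
    and uvw: "u > 0" "v > 0" "w > 0" "u + v + w = 1"
    and IF: "(\<integral>\<^sup>+x. ennreal (F x) \<partial>M) = ennreal A"
    and IG: "(\<integral>\<^sup>+x. ennreal (G x) \<partial>M) = ennreal B"
    and IH: "(\<integral>\<^sup>+x. ennreal (H x) \<partial>M) = ennreal C"
    and ABC: "A \<ge> 0" "B \<ge> 0" "C \<ge> 0"
  shows "(\<integral>\<^sup>+x. ennreal (F x powr u * G x powr v * H x powr w) \<partial>M)
          \<le> ennreal (A powr u * B powr v * C powr w)"
proof (cases "A = 0 \<or> B = 0 \<or> C = 0")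
  case True
  have "AE x in M. F x powr u * G x powr v * H x powr w = 0"
  proof -
    { assume "A = 0"
      then have "AE x in M. F x = 0" using IF nn by (intro nn_zero_AE_real) auto
      then have ?thesis by (auto elim!: eventually_mono) }
    moreover
    { assume "B = 0"
      then have "AE x in M. G x = 0" using IG nn by (intro nn_zero_AE_real) auto
      then have ?thesis by (auto elim!: eventually_mono) }
    moreover
    { assume "C = 0"
      then have "AE x in M. H x = 0" using IH nn by (intro nn_zero_AE_real) auto
      then have ?thesis by (auto elim!: eventually_mono) }
    ultimately show ?thesis using True by blast
  qed
  then have "(\<integral>\<^sup>+x. ennreal (F x powr u * G x powr v * H x powr w) \<partial>M) = (\<integral>\<^sup>+x. 0 \<partial>M)"
    by (intro nn_integral_cong_AE) (auto elim!: eventually_mono)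
  then show ?thesis by simp
next
  case False
  with ABC have pos: "A > 0" "B > 0" "C > 0" by auto
  define K where "K = A powr u * B powr v * C powr w"
  have K0: "K \<ge> 0" unfolding K_def by simp
  have hF: "has_bochner_integral M F A"
    using IF nn ABC by (intro has_bochner_integral_nn_integral) auto
  have hG: "has_bochner_integral M G B"
    using IG nn ABC by (intro has_bochner_integral_nn_integral) auto
  have hH: "has_bochner_integral M H C"
    using IH nn ABC by (intro has_bochner_integral_nn_integral) auto
  define R where "R x = K * (u / A * F x + v / B * G x + w / C * H x)" for x
  have hR: "has_bochner_integral M R (K * (u / A * A + v / B * B + w / C * C))"
    unfolding R_def
    by (intro has_bochner_integral_mult_right has_bochner_integral_add
          has_bochner_integral_mult_right hF hG hH)
  also have "K * (u / A * A + v / B * B + w / C * C) = K" using pos uvw by simp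
  finally have hR': "has_bochner_integral M R K" .
  have pt: "F x powr u * G x powr v * H x powr w \<le> R x" for x
  proof -
    have "F x powr u * G x powr v * H x powr w
        = K * ((F x / A) powr u * (G x / B) powr v * (H x / C) powr w)"
      unfolding K_def using nn pos by (simp add: powr_divide field_simps)
    also have "\<dots> \<le> K * (u * (F x / A) + v * (G x / B) + w * (H x / C))"
      using nn pos uvw K0 by (intro mult_left_mono amgm3) auto
    finally show ?thesis unfolding R_def by simp
  qed
  have Rnn: "R x \<ge> 0" for x using pt[of x] by (smt (verit) nn powr_ge_zero mult_nonneg_nonneg)
  have "(\<integral>\<^sup>+x. ennreal (F x powr u * G x powr v * H x powr w) \<partial>M) \<le> (\<integral>\<^sup>+x. ennreal (R x) \<partial>M)"
    using pt by (intro nn_integral_mono) (auto intro: ennreal_leI)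
  also have "\<dots> = ennreal K"
    using hR' Rnn by (simp add: nn_integral_eq_integral has_bochner_integral_iff)
  finally show ?thesis unfolding K_def .
qed



lemma nn_integral_reflect:
  fixes F :: "'a::euclidean_space \<Rightarrow> ennreal"
  assumes [measurable]: "F \<in> borel_measurable borel"
  shows "(\<integral>\<^sup>+y. F (x - y) \<partial>lborel) = (\<integral>\<^sup>+z. F z \<partial>lborel)"
proof -
  have eq: "lborel = density (distr lborel borel (\<lambda>y. x + (-1) *\<^sub>R y)) (\<lambda>_. \<bar>-1::real\<bar>^DIM('a))"
    by (rule lborel_affine) simp
  have "(\<integral>\<^sup>+z. F z \<partial>lborel) = nn_integral (density (distr lborel borel (\<lambda>y. x + (-1) *\<^sub>R y)) (\<lambda>_. \<bar>-1::real\<bar>^DIM('a))) F"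
    using eq by (rule arg_cong[where f="\<lambda>M. nn_integral M F"])
  also have "\<dots> = (\<integral>\<^sup>+y. F (x - y) \<partial>lborel)"
    by (simp add: nn_integral_density nn_integral_distr)
  finally show ?thesis ..
qed

lemma nn_integral_shift:
  fixes F :: "'a::euclidean_space \<Rightarrow> ennreal"
  assumes [measurable]: "F \<in> borel_measurable borel"
  shows "(\<integral>\<^sup>+x. F (x - y) \<partial>lborel) = (\<integral>\<^sup>+z. F z \<partial>lborel)"
proof -
  have eq: "lborel = density (distr lborel borel (\<lambda>x. (-y) + (1::real) *\<^sub>R x)) (\<lambda>_. \<bar>1::real\<bar>^DIM('a))"
    by (rule lborel_affine) simp
  have "(\<integral>\<^sup>+z. F z \<partial>lborel) = nn_integral (density (distr lborel borel (\<lambda>x. (-y) + (1::real) *\<^sub>R x)) (\<lambda>_. \<bar>1::real\<bar>^DIM('a))) F"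
    using eq by (rule arg_cong[where f="\<lambda>M. nn_integral M F"])
  also have "\<dots> = (\<integral>\<^sup>+x. F (x - y) \<partial>lborel)"
    by (simp add: nn_integral_density nn_integral_distr)
  finally show ?thesis ..
qed

lemma nn_integral_scale:
  fixes F :: "'a::euclidean_space \<Rightarrow> ennreal"
  assumes [measurable]: "F \<in> borel_measurable borel" and c: "c > 0"
  shows "(\<integral>\<^sup>+z. F z \<partial>lborel) = ennreal (c ^ DIM('a)) * (\<integral>\<^sup>+w. F (c *\<^sub>R w) \<partial>lborel)"
proof -
  have eq: "lborel = density (distr lborel borel (\<lambda>x::'a. 0 + c *\<^sub>R x)) (\<lambda>_. \<bar>c\<bar>^DIM('a))"
    by (rule lborel_affine) (use c in simp)
  have "(\<integral>\<^sup>+z. F z \<partial>lborel) = nn_integral (density (distr lborel borel (\<lambda>x::'a. 0 + c *\<^sub>R x)) (\<lambda>_. \<bar>c\<bar>^DIM('a))) F"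
    using eq by (rule arg_cong[where f="\<lambda>M. nn_integral M F"])
  also have "\<dots> = (\<integral>\<^sup>+w. ennreal (c ^ DIM('a)) * F (c *\<^sub>R w) \<partial>lborel)"
    using c by (simp add: nn_integral_density nn_integral_distr)
  also have "\<dots> = ennreal (c ^ DIM('a)) * (\<integral>\<^sup>+w. F (c *\<^sub>R w) \<partial>lborel)"
    by (simp add: nn_integral_cmult)
  finally show ?thesis .
qed



lemma powr_split_one:
  fixes z a b :: real
  assumes "z \<ge> 0" "a + b = 1"
  shows "z powr a * z powr b = z"
  using assms by (cases "z = 0") (auto simp: powr_add[symmetric])

lemma powr_times_self:
  fixes z a :: real
  assumes "z \<ge> 0"
  shows "z powr a * z = z powr (a + 1)"
  using assms by (cases "z = 0") (auto simp: powr_add)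

lemma young:
  fixes k g :: "'a::euclidean_space \<Rightarrow> real"
  assumes km[measurable]: "k \<in> borel_measurable borel" and gm[measurable]: "g \<in> borel_measurable borel"
    and nnk: "\<And>z. k z \<ge> 0" and nng: "\<And>z. g z \<ge> 0"
    and pr: "p > 1" "r > 1" "q > 0" "1/p + 1/r = 1 + 1/q"
    and Ik: "(\<integral>\<^sup>+z. ennreal (k z powr r) \<partial>lborel) = ennreal KR"
    and Ig: "(\<integral>\<^sup>+y. ennreal (g y powr p) \<partial>lborel) = ennreal GP"
    and KR: "KR \<ge> 0" and GP: "GP \<ge> 0"
  shows "AE x in lborel. (\<integral>\<^sup>+y. ennreal (k (x - y) * g y) \<partial>lborel) < \<infinity>"
    and "(\<integral>\<^sup>+x. ennreal (enn2real (\<integral>\<^sup>+y. ennreal (k (x - y) * g y) \<partial>lborel) powr q) \<partial>lborel)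
           \<le> ennreal (KR powr (q/r) * GP powr (q/p))"
proof -
  define u where "u = 1/q"
  define v where "v = 1/r - 1/q"
  define w where "w = 1/p - 1/q"
  have u: "u > 0" using pr unfolding u_def by simp
  have v: "v > 0"
  proof -
    have "v = 1 - 1/p" using pr(4) unfolding v_def by linarith
    moreover have "1/p < 1" using pr by simp
    ultimately show ?thesis by linarith
  qed
  have w: "w > 0"
  proof -
    have "w = 1 - 1/r" using pr(4) unfolding w_def by linarith
    moreover have "1/r < 1" using pr by simp
    ultimately show ?thesis by linarith
  qed
  have uvw: "u + v + w = 1" using pr unfolding u_def v_def w_def by simp
  have ru: "r * (u + v) = 1" using pr unfolding u_def v_def by (simp add: field_simps)
  have pu: "p * (u + w) = 1" using pr unfolding u_def w_def by (simp add: field_simps)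
  define Hx where "Hx x = (\<integral>\<^sup>+y. ennreal (k (x - y) powr r * g y powr p) \<partial>lborel)" for x
  define h where "h x = (\<integral>\<^sup>+y. ennreal (k (x - y) * g y) \<partial>lborel)" for x
  have Hxm[measurable]: "Hx \<in> borel_measurable lborel"
    unfolding Hx_def by measurable
  have refl: "(\<integral>\<^sup>+y. ennreal (k (x - y) powr r) \<partial>lborel) = ennreal KR" for x
    using nn_integral_reflect[of "\<lambda>z. ennreal (k z powr r)" x] Ik by simp
  have "(\<integral>\<^sup>+x. Hx x \<partial>lborel) = (\<integral>\<^sup>+y. (\<integral>\<^sup>+x. ennreal (k (x - y) powr r * g y powr p) \<partial>lborel) \<partial>lborel)"
    unfolding Hx_def by (rule lborel_pair.Fubini'[symmetric]) measurable
  also have "\<dots> = (\<integral>\<^sup>+y. ennreal (g y powr p) * ennreal KR \<partial>lborel)"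
  proof (rule nn_integral_cong)
    fix y
    have "(\<integral>\<^sup>+x. ennreal (k (x - y) powr r * g y powr p) \<partial>lborel)
        = (\<integral>\<^sup>+x. ennreal (k (x - y) powr r) * ennreal (g y powr p) \<partial>lborel)"
      by (simp add: ennreal_mult)
    also have "\<dots> = (\<integral>\<^sup>+x. ennreal (k (x - y) powr r) \<partial>lborel) * ennreal (g y powr p)"
      by (simp add: nn_integral_multc)
    also have "(\<integral>\<^sup>+x. ennreal (k (x - y) powr r) \<partial>lborel) = ennreal KR"
      using nn_integral_shift[of "\<lambda>z. ennreal (k z powr r)" y] Ik by simp
    finally show "(\<integral>\<^sup>+x. ennreal (k (x - y) powr r * g y powr p) \<partial>lborel) = ennreal (g y powr p) * ennreal KR"
      by (simp add: mult.commute)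
  qed
  also have "\<dots> = ennreal (GP * KR)"
    using Ig KR GP by (simp add: nn_integral_multc ennreal_mult)
  finally have IH: "(\<integral>\<^sup>+x. Hx x \<partial>lborel) = ennreal (GP * KR)" .
  have AEH: "AE x in lborel. Hx x \<noteq> \<infinity>"
    using IH by (intro nn_integral_PInf_AE) auto
  have key: "h x \<le> ennreal (enn2real (Hx x) powr u * KR powr v * GP powr w)" if "Hx x \<noteq> \<infinity>" for x
  proof -
    have HxE: "Hx x = ennreal (enn2real (Hx x))" using that by (simp add: less_top)
    have eq: "(k (x - y) powr r * g y powr p) powr u * (k (x - y) powr r) powr v * (g y powr p) powr w
        = k (x - y) * g y" for y
    proof -
      have "(k (x - y) powr r * g y powr p) powr u * (k (x - y) powr r) powr v * (g y powr p) powr w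
          = (k (x - y) powr (r * u) * k (x - y) powr (r * v)) * (g y powr (p * u) * g y powr (p * w))"
        using nnk nng by (simp add: powr_mult powr_powr)
      also have "\<dots> = k (x - y) * g y"
        using nnk nng ru pu by (simp add: powr_split_one distrib_left)
      finally show ?thesis .
    qed
    have "h x = (\<integral>\<^sup>+y. ennreal ((k (x - y) powr r * g y powr p) powr u * (k (x - y) powr r) powr v * (g y powr p) powr w) \<partial>lborel)"
      unfolding h_def eq ..
    also have "\<dots> \<le> ennreal (enn2real (Hx x) powr u * KR powr v * GP powr w)"
      by (rule holder3[OF _ _ _ _ _ _ u v w uvw _ refl Ig _ KR GP])
         (use nnk nng HxE in \<open>auto simp: Hx_def\<close>)
    finally show ?thesis .
  qed
  show "AE x in lborel. h x < \<infinity>" unfolding h_def[symmetric]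
    using AEH
  proof (elim eventually_mono)
    fix x assume "Hx x \<noteq> \<infinity>"
    then have "h x \<le> ennreal (enn2real (Hx x) powr u * KR powr v * GP powr w)" by (rule key)
    then show "h x < \<infinity>" by (simp add: order.strict_trans1)
  qed
  have pt: "ennreal (enn2real (h x) powr q) \<le> ennreal (enn2real (Hx x) * (KR powr (v * q) * GP powr (w * q)))"
    if "Hx x \<noteq> \<infinity>" for x
  proof -
    have "enn2real (h x) \<le> enn2real (Hx x) powr u * KR powr v * GP powr w"
      using key[OF that] by (intro enn2real_leI) auto
    then have "enn2real (h x) powr q \<le> (enn2real (Hx x) powr u * KR powr v * GP powr w) powr q"
      using pr by (intro powr_mono2) auto
    also have "\<dots> = enn2real (Hx x) powr (u * q) * (KR powr (v * q) * GP powr (w * q))"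
      by (simp add: powr_mult powr_powr)
    also have "u * q = 1" using pr unfolding u_def by simp
    finally show ?thesis by (intro ennreal_leI) simp
  qed
  have "(\<integral>\<^sup>+x. ennreal (enn2real (h x) powr q) \<partial>lborel)
      \<le> (\<integral>\<^sup>+x. ennreal (enn2real (Hx x) * (KR powr (v * q) * GP powr (w * q))) \<partial>lborel)"
  proof (rule nn_integral_mono_AE)
    show "AE x in lborel. ennreal (enn2real (h x) powr q) \<le> ennreal (enn2real (Hx x) * (KR powr (v * q) * GP powr (w * q)))"
      using AEH by (rule eventually_mono) (rule pt)
  qed
  also have "\<dots> = (\<integral>\<^sup>+x. Hx x * ennreal (KR powr (v * q) * GP powr (w * q)) \<partial>lborel)"
  proof (rule nn_integral_cong_AE)
    show "AE x in lborel. ennreal (enn2real (Hx x) * (KR powr (v * q) * GP powr (w * q))) = Hx x * ennreal (KR powr (v * q) * GP powr (w * q))"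
      using AEH
    proof (rule eventually_mono)
      fix x assume "Hx x \<noteq> \<infinity>"
      then show "ennreal (enn2real (Hx x) * (KR powr (v * q) * GP powr (w * q))) = Hx x * ennreal (KR powr (v * q) * GP powr (w * q))"
        by (simp add: ennreal_mult' less_top)
    qed
  qed
  also have "\<dots> = ennreal (GP * KR) * ennreal (KR powr (v * q) * GP powr (w * q))"
    using IH by (simp add: nn_integral_multc)
  also have "\<dots> = ennreal ((KR powr (v * q) * KR) * (GP powr (w * q) * GP))"
    using KR GP by (simp add: ennreal_mult'[symmetric] mult_ac)
  also have "(KR powr (v * q) * KR) * (GP powr (w * q) * GP) = KR powr (q/r) * GP powr (q/p)"
  proof -
    have "v * q + 1 = q / r" using pr unfolding v_def by (simp add: field_simps)
    moreover have "w * q + 1 = q / p" using pr unfolding w_def by (simp add: field_simps)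
    ultimately show ?thesis using KR GP by (simp add: powr_times_self)
  qed
  finally show "(\<integral>\<^sup>+x. ennreal (enn2real (\<integral>\<^sup>+y. ennreal (k (x - y) * g y) \<partial>lborel) powr q) \<partial>lborel)
           \<le> ennreal (KR powr (q/r) * GP powr (q/p))" unfolding h_def .
qed


lemma finite_1d:
  fixes c e :: real
  assumes c: "c > 0" and e: "e > 1/2"
  shows "(\<integral>\<^sup>+x. ennreal ((c + x\<^sup>2) powr (-e)) \<partial>lborel) < \<infinity>"
proof -
  define F :: "real \<Rightarrow> ennreal" where "F z = ennreal (indicator {1..} z * z powr (-2*e))" for z
  have Fm[measurable]: "F \<in> borel_measurable borel" unfolding F_def by measurable
  have IF: "(\<integral>\<^sup>+z. F z \<partial>lborel) = ennreal (- (1 powr (-2*e+1)) / (-2*e+1))"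
  proof -
    have "((\<lambda>x. x powr (-2*e)) has_integral -(1 powr (-2*e+1))/(-2*e+1)) {1..}"
      by (rule has_integral_powr_to_inf) (use e in auto)
    then show ?thesis unfolding F_def
      by (intro nn_integral_has_integral_lebesgue) auto
  qed
  have IF2: "(\<integral>\<^sup>+z. F (0 - z) \<partial>lborel) = (\<integral>\<^sup>+z. F z \<partial>lborel)"
    by (rule nn_integral_reflect) simp
  have pt: "ennreal ((c + x\<^sup>2) powr (-e)) \<le> ennreal (c powr (-e)) * indicator {-1..1} x + F x + F (0 - x)" for x
  proof (cases "\<bar>x\<bar> \<le> 1")
    case True
    have "(c + x\<^sup>2) powr (-e) \<le> c powr (-e)" using c e by (intro powr_mono2') auto
    then have "ennreal ((c + x\<^sup>2) powr (-e)) \<le> ennreal (c powr (-e)) * indicator {-1..1} x"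
      using True by (auto simp: indicator_def intro: ennreal_leI)
    then show ?thesis by (simp add: add.assoc add_increasing2)
  next
    case False
    have "(c + x\<^sup>2) powr (-e) \<le> (x\<^sup>2) powr (-e)" using c e False by (intro powr_mono2') auto
    also have "(x\<^sup>2) powr (-e) = \<bar>x\<bar> powr (-2*e)"
    proof -
      have eq: "x\<^sup>2 = \<bar>x\<bar> powr 2" by (simp add: powr_numeral)
      have "(x\<^sup>2) powr (-e) = (\<bar>x\<bar> powr 2) powr (-e)" by (subst eq) (rule refl)
      also have "\<dots> = \<bar>x\<bar> powr (2 * (-e))" by (rule powr_powr)
      finally show ?thesis by simp
    qed
    finally have le: "(c + x\<^sup>2) powr (-e) \<le> \<bar>x\<bar> powr (-2*e)" .
    show ?thesis
    proof (cases "x \<ge> 1")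
      case True
      then have "ennreal ((c + x\<^sup>2) powr (-e)) \<le> F x" using le unfolding F_def
        by (auto intro: ennreal_leI)
      then show ?thesis by (simp add: add_increasing add_increasing2)
    next
      case False2: False
      then have "x \<le> -1" using False by auto
      then have "ennreal ((c + x\<^sup>2) powr (-e)) \<le> F (0 - x)" using le unfolding F_def
        by (auto intro: ennreal_leI)
      then show ?thesis by (simp add: add_increasing)
    qed
  qed
  have "(\<integral>\<^sup>+x. ennreal ((c + x\<^sup>2) powr (-e)) \<partial>lborel)
      \<le> (\<integral>\<^sup>+x. ennreal (c powr (-e)) * indicator {-1..1} x + F x + F (0 - x) \<partial>lborel)"
    by (intro nn_integral_mono pt)
  also have "\<dots> = ennreal (c powr (-e)) * emeasure lborel {-1..1::real} + (\<integral>\<^sup>+z. F z \<partial>lborel) + (\<integral>\<^sup>+z. F (0 - z) \<partial>lborel)"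
    by (simp add: nn_integral_add nn_integral_cmult_indicator)
  also have "\<dots> < \<infinity>" unfolding IF2 IF by (simp add: ennreal_mult_less_top)
  finally show ?thesis .
qed



lemma finite_nd:
  fixes c \<gamma> :: real
  assumes c: "c > 0" and g: "\<gamma> > real DIM('a::euclidean_space)"
  shows "(\<integral>\<^sup>+w. ennreal ((c + (norm (w::'a))\<^sup>2) powr (-\<gamma>/2)) \<partial>lborel) < \<infinity>"
proof -
  define d where "d = real DIM('a)"
  have d: "d > 0" unfolding d_def by simp
  define e where "e = \<gamma> / (2*d)"
  have e: "e > 1/2" using g d unfolding e_def d_def by (simp add: field_simps)
  define f where "f b t = (c + t\<^sup>2) powr (-e)" for b::'a and t::real
  have fm[measurable]: "f b \<in> borel_measurable borel" for b unfolding f_def by measurable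
  have pt: "(c + (norm w)\<^sup>2) powr (-\<gamma>/2) \<le> (\<Prod>b\<in>Basis. f b (w \<bullet> b))" for w :: 'a
  proof -
    have pos: "c + (norm w)\<^sup>2 > 0" using c by (simp add: add_pos_nonneg)
    have "(c + (norm w)\<^sup>2) powr (-\<gamma>/2) = ((c + (norm w)\<^sup>2) powr (-e)) ^ DIM('a)"
      using pos d by (simp add: powr_power e_def d_def)
    also have "\<dots> = (\<Prod>b\<in>(Basis::'a set). (c + (norm w)\<^sup>2) powr (-e))"
      by simp
    also have "\<dots> \<le> (\<Prod>b\<in>Basis. f b (w \<bullet> b))"
    proof (rule prod_mono)
      fix b :: 'a assume b: "b \<in> Basis"
      have "\<bar>w \<bullet> b\<bar> \<le> norm w" using b by (rule Basis_le_norm)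
      then have "(w \<bullet> b)\<^sup>2 \<le> (norm w)\<^sup>2"
        by (metis abs_ge_zero power2_abs power_mono)
      then show "0 \<le> (c + (norm w)\<^sup>2) powr (-e) \<and> (c + (norm w)\<^sup>2) powr (-e) \<le> f b (w \<bullet> b)"
        unfolding f_def using c e by (auto intro!: powr_mono2' add_pos_nonneg)
    qed
    finally show ?thesis .
  qed
  have "(\<integral>\<^sup>+w. ennreal ((c + (norm (w::'a))\<^sup>2) powr (-\<gamma>/2)) \<partial>lborel)
      \<le> (\<integral>\<^sup>+w. ennreal (\<Prod>b\<in>Basis. f b ((w::'a) \<bullet> b)) \<partial>lborel)"
    by (intro nn_integral_mono ennreal_leI pt)
  also have "\<dots> = (\<integral>\<^sup>+w. (\<Prod>b\<in>Basis. ennreal (f b ((w::'a) \<bullet> b))) \<partial>lborel)"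
    by (subst prod_ennreal) (auto simp: f_def)
  also have "\<dots> = (\<Prod>b\<in>(Basis::'a set). (\<integral>\<^sup>+x. ennreal (f b x) \<partial>lborel))"
    by (rule nn_integral_lborel_prod) auto
  also have "\<dots> < \<infinity>"
    using finite_1d[OF c e] by (simp add: f_def power_less_top_ennreal)
  finally show ?thesis .
qed



lemma kernel0_finite:
  fixes t s r \<beta> :: real
  assumes t: "t > 0" and r: "r > 0" and srd: "2 * s * r > real DIM('a::euclidean_space)"
  shows "(\<integral>\<^sup>+z. ennreal ((t powr \<beta> / (t\<^sup>2 + (norm (z::'a))\<^sup>2) powr s) powr r) \<partial>lborel) < \<infinity>"
proof -
  have eq: "(t powr \<beta> / (t\<^sup>2 + (norm z)\<^sup>2) powr s) powr r
      = t powr (\<beta> * r) * (t\<^sup>2 + (norm z)\<^sup>2) powr (-(2 * s * r)/2)" for z :: 'a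
  proof -
    have pos: "t\<^sup>2 + (norm z)\<^sup>2 > 0" using t by (simp add: add_pos_nonneg)
    have "(t powr \<beta> / (t\<^sup>2 + (norm z)\<^sup>2) powr s) powr r
        = (t powr \<beta>) powr r / ((t\<^sup>2 + (norm z)\<^sup>2) powr s) powr r" by (rule powr_divide)
    also have "\<dots> = t powr (\<beta> * r) / (t\<^sup>2 + (norm z)\<^sup>2) powr (s * r)" by (simp only: powr_powr)
    also have "\<dots> = t powr (\<beta> * r) * (t\<^sup>2 + (norm z)\<^sup>2) powr (-(s * r))"
      by (simp only: powr_minus_divide) simp
    also have "-(s * r) = -(2 * s * r)/2" by simp
    finally show ?thesis .
  qed
  have "(\<integral>\<^sup>+z. ennreal ((t powr \<beta> / (t\<^sup>2 + (norm (z::'a))\<^sup>2) powr s) powr r) \<partial>lborel)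
      = (\<integral>\<^sup>+z. ennreal (t powr (\<beta> * r)) * ennreal ((t\<^sup>2 + (norm (z::'a))\<^sup>2) powr (-(2 * s * r)/2)) \<partial>lborel)"
    unfolding eq by (simp add: ennreal_mult)
  also have "\<dots> = ennreal (t powr (\<beta> * r)) * (\<integral>\<^sup>+z. ennreal ((t\<^sup>2 + (norm (z::'a))\<^sup>2) powr (-(2 * s * r)/2)) \<partial>lborel)"
    by (simp add: nn_integral_cmult)
  also have "\<dots> < \<infinity>"
    using finite_nd[where 'a='a, of "t\<^sup>2" "2 * s * r"] t srd by (simp add: ennreal_mult_less_top)
  finally show ?thesis .
qed

lemma kernelJ_finite:
  fixes s r \<theta> :: real
  assumes r: "r > 0" and th: "\<theta> \<ge> 0" and srd: "(2 * s - \<theta>) * r > real DIM('a::euclidean_space)"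
  shows "(\<integral>\<^sup>+w. ennreal ((norm (w::'a) powr \<theta> / (1 + (norm w)\<^sup>2) powr s) powr r) \<partial>lborel) < \<infinity>"
proof -
  have pt: "(norm w powr \<theta> / (1 + (norm w)\<^sup>2) powr s) powr r
      \<le> (1 + (norm w)\<^sup>2) powr (-((2 * s - \<theta>) * r)/2)" for w :: 'a
  proof -
    define Y where "Y = 1 + (norm w)\<^sup>2"
    have Y: "Y > 0" unfolding Y_def by (simp add: add_pos_nonneg)
    have "norm w powr \<theta> = ((norm w)\<^sup>2) powr (\<theta>/2)"
    proof -
      have e: "(norm w)\<^sup>2 = norm w powr 2" by (simp add: powr_numeral)
      have "((norm w)\<^sup>2) powr (\<theta>/2) = (norm w powr 2) powr (\<theta>/2)" by (subst e) (rule refl)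
      also have "\<dots> = norm w powr (2 * (\<theta>/2))" by (rule powr_powr)
      finally show ?thesis by simp
    qed
    also have "\<dots> \<le> Y powr (\<theta>/2)" unfolding Y_def using th by (intro powr_mono2) auto
    finally have n: "norm w powr \<theta> \<le> Y powr (\<theta>/2)" .
    have "norm w powr \<theta> / Y powr s \<le> Y powr (\<theta>/2) / Y powr s"
      using n Y by (intro divide_right_mono) auto
    also have "\<dots> = Y powr (\<theta>/2 - s)" using Y by (simp add: powr_diff)
    finally have "(norm w powr \<theta> / Y powr s) powr r \<le> (Y powr (\<theta>/2 - s)) powr r"
      using r by (intro powr_mono2) auto
    also have "\<dots> = Y powr ((\<theta>/2 - s) * r)" by (rule powr_powr)
    also have "(\<theta>/2 - s) * r = -((2 * s - \<theta>) * r)/2" by (simp add: field_simps)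
    finally show ?thesis unfolding Y_def .
  qed
  have "(\<integral>\<^sup>+w. ennreal ((norm (w::'a) powr \<theta> / (1 + (norm w)\<^sup>2) powr s) powr r) \<partial>lborel)
     \<le> (\<integral>\<^sup>+w. ennreal ((1 + (norm (w::'a))\<^sup>2) powr (-((2 * s - \<theta>) * r)/2)) \<partial>lborel)"
    by (intro nn_integral_mono ennreal_leI pt)
  also have "\<dots> < \<infinity>" using finite_nd[where 'a='a, of 1 "(2 * s - \<theta>) * r"] srd by simp
  finally show ?thesis .
qed



lemma kernel_scale:
  fixes t s r \<theta> \<beta> J :: real
  assumes t: "t > 0"
    and J: "(\<integral>\<^sup>+w. ennreal ((norm (w::'a::euclidean_space) powr \<theta> / (1 + (norm w)\<^sup>2) powr s) powr r) \<partial>lborel) = ennreal J"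
  shows "(\<integral>\<^sup>+z. ennreal ((norm (z::'a) powr \<theta> * t powr \<beta> / (t\<^sup>2 + (norm z)\<^sup>2) powr s) powr r) \<partial>lborel)
         = ennreal (t powr (real DIM('a) + r * (\<theta> + \<beta> - 2 * s)) * J)"
proof -
  define F where "F z = ennreal ((norm (z::'a) powr \<theta> * t powr \<beta> / (t\<^sup>2 + (norm z)\<^sup>2) powr s) powr r)" for z
  have Fm[measurable]: "F \<in> borel_measurable borel" unfolding F_def by measurable
  have pt: "F (t *\<^sub>R w) = ennreal (t powr ((\<theta> + \<beta> - 2 * s) * r)) * ennreal ((norm w powr \<theta> / (1 + (norm w)\<^sup>2) powr s) powr r)" for w
  proof -
    define nw where "nw = norm w"
    define Y where "Y = 1 + nw\<^sup>2"
    have nw: "nw \<ge> 0" unfolding nw_def by simp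
    have Y: "Y > 0" unfolding Y_def by (simp add: add_pos_nonneg)
    have n1: "norm (t *\<^sub>R w) = t * nw" using t unfolding nw_def by simp
    have n2: "t\<^sup>2 + (t * nw)\<^sup>2 = t\<^sup>2 * Y" unfolding Y_def by (simp add: algebra_simps power_mult_distrib)
    have t2: "(t\<^sup>2) powr s = t powr (2 * s)"
    proof -
      have e: "t\<^sup>2 = t powr 2" using t by (simp add: powr_numeral)
      have "(t\<^sup>2) powr s = (t powr 2) powr s" by (subst e) (rule refl)
      also have "\<dots> = t powr (2 * s)" by (rule powr_powr)
      finally show ?thesis .
    qed
    have "norm (t *\<^sub>R w) powr \<theta> * t powr \<beta> / (t\<^sup>2 + (norm (t *\<^sub>R w))\<^sup>2) powr s
        = (t * nw) powr \<theta> * t powr \<beta> / (t\<^sup>2 * Y) powr s" unfolding n1 n2 ..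
    also have "\<dots> = (t powr \<theta> * t powr \<beta> / t powr (2 * s)) * (nw powr \<theta> / Y powr s)"
      using t nw Y by (simp add: powr_mult t2)
    also have "t powr \<theta> * t powr \<beta> / t powr (2 * s) = t powr (\<theta> + \<beta> - 2 * s)"
      using t by (simp add: powr_add powr_diff)
    finally have eq: "norm (t *\<^sub>R w) powr \<theta> * t powr \<beta> / (t\<^sup>2 + (norm (t *\<^sub>R w))\<^sup>2) powr s
        = t powr (\<theta> + \<beta> - 2 * s) * (nw powr \<theta> / Y powr s)" .
    have "F (t *\<^sub>R w) = ennreal ((t powr (\<theta> + \<beta> - 2 * s) * (nw powr \<theta> / Y powr s)) powr r)"
      unfolding F_def eq ..
    also have "(t powr (\<theta> + \<beta> - 2 * s) * (nw powr \<theta> / Y powr s)) powr r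
        = t powr ((\<theta> + \<beta> - 2 * s) * r) * (nw powr \<theta> / Y powr s) powr r"
    proof -
      have "0 \<le> nw powr \<theta> / Y powr s" using nw Y by simp
      then have "(t powr (\<theta> + \<beta> - 2 * s) * (nw powr \<theta> / Y powr s)) powr r
          = (t powr (\<theta> + \<beta> - 2 * s)) powr r * (nw powr \<theta> / Y powr s) powr r"
        by (intro powr_mult)
      then show ?thesis by (simp only: powr_powr)
    qed
    finally show ?thesis unfolding nw_def Y_def by (simp add: ennreal_mult)
  qed
  have "(\<integral>\<^sup>+z. F z \<partial>lborel) = ennreal (t ^ DIM('a)) * (\<integral>\<^sup>+w. F (t *\<^sub>R w) \<partial>lborel)"
    using t by (rule nn_integral_scale[OF Fm])
  also have "(\<integral>\<^sup>+w. F (t *\<^sub>R w) \<partial>lborel) = ennreal (t powr ((\<theta> + \<beta> - 2 * s) * r)) * ennreal J"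
    unfolding pt by (simp add: nn_integral_cmult J)
  also have "ennreal (t ^ DIM('a)) * (ennreal (t powr ((\<theta> + \<beta> - 2 * s) * r)) * ennreal J)
      = ennreal (t powr (real DIM('a) + r * (\<theta> + \<beta> - 2 * s)) * J)"
  proof -
    have "t ^ DIM('a) = t powr real DIM('a)" using t by (simp add: powr_realpow)
    then have "t ^ DIM('a) * t powr ((\<theta> + \<beta> - 2 * s) * r) = t powr (real DIM('a) + r * (\<theta> + \<beta> - 2 * s))"
      using t by (simp add: powr_add mult.commute)
    moreover have "0 \<le> t ^ DIM('a)" "0 \<le> t powr ((\<theta> + \<beta> - 2 * s) * r)" using t by auto
    ultimately show ?thesis by (simp add: ennreal_mult'[symmetric] mult.assoc[symmetric])
  qed
  finally show ?thesis unfolding F_def .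
qed



lemma phi_facts:
  fixes \<phi> :: "'a::euclidean_space \<Rightarrow> real" and \<phi>' :: "'a \<Rightarrow> ('a \<Rightarrow>\<^sub>L real)"
  assumes deriv: "\<forall>x. (\<phi> has_derivative blinfun_apply (\<phi>' x)) (at x)"
    and cont: "continuous_on UNIV \<phi>'" and supp: "has_compact_support \<phi>"
  shows "\<phi> \<in> borel_measurable borel"
    and "\<And>x. \<bar>\<phi> x\<bar> \<le> (SUP x. \<bar>\<phi> x\<bar>)"
    and "\<And>x. norm (\<phi>' x) \<le> (SUP x. norm (\<phi>' x))"
    and "\<And>x y. \<bar>\<phi> x - \<phi> y\<bar> \<le> (SUP x. norm (\<phi>' x)) * norm (x - y)"
proof -
  obtain K where K: "compact K" "\<And>x. x \<notin> K \<Longrightarrow> \<phi> x = 0"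
    using supp unfolding has_compact_support_def by blast
  have contphi: "continuous_on UNIV \<phi>"
    using deriv by (intro continuous_at_imp_continuous_on) (auto intro: has_derivative_continuous)
  then show "\<phi> \<in> borel_measurable borel" by (rule borel_measurable_continuous_onI)
  have "bounded ((\<lambda>x. \<bar>\<phi> x\<bar>) ` K)"
    using K(1) contphi by (intro compact_imp_bounded compact_continuous_image continuous_intros)
      (auto intro: continuous_on_subset)
  then obtain M where M: "\<And>x. x \<in> K \<Longrightarrow> \<bar>\<phi> x\<bar> \<le> M"
    unfolding bounded_real by auto
  have bdd1: "bdd_above (range (\<lambda>x. \<bar>\<phi> x\<bar>))"
  proof (rule bdd_aboveI[of _ "max M 0"])
    fix y assume "y \<in> range (\<lambda>x. \<bar>\<phi> x\<bar>)"
    then obtain x where "y = \<bar>\<phi> x\<bar>" by auto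
    then show "y \<le> max M 0" using M K(2) by (cases "x \<in> K") force+
  qed
  show "\<And>x. \<bar>\<phi> x\<bar> \<le> (SUP x. \<bar>\<phi> x\<bar>)" using bdd1 by (intro cSUP_upper) auto
  have zero: "\<phi>' x = 0" if "x \<notin> K" for x
  proof -
    have "open (- K)" using K(1) by (simp add: compact_imp_closed open_Compl)
    have d1: "(\<phi> has_derivative blinfun_apply (\<phi>' x)) (at x within UNIV)" using deriv by simp
    have "((\<lambda>_. 0::real) has_derivative blinfun_apply (\<phi>' x)) (at x within UNIV)"
    proof (rule has_derivative_transform_within_open[OF d1 \<open>open (- K)\<close>])
      show "x \<in> - K" using that by simp
      show "\<And>y. y \<in> - K \<Longrightarrow> \<phi> y = 0" using K(2) by simp
    qed
    moreover have "((\<lambda>_. 0::real) has_derivative (\<lambda>_. 0)) (at x)" by (rule has_derivative_const)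
    ultimately have "blinfun_apply (\<phi>' x) = (\<lambda>_. 0)" by (rule has_derivative_unique)
    then show ?thesis by (intro blinfun_eqI) simp
  qed
  have "bounded ((\<lambda>x. norm (\<phi>' x)) ` K)"
    using K(1) cont by (intro compact_imp_bounded compact_continuous_image continuous_intros)
      (auto intro: continuous_on_subset)
  then obtain M' where M': "\<And>x. x \<in> K \<Longrightarrow> norm (norm (\<phi>' x)) \<le> M'"
    unfolding bounded_iff by auto
  have bdd2: "bdd_above (range (\<lambda>x. norm (\<phi>' x)))"
  proof (rule bdd_aboveI[of _ "max M' 0"])
    fix y assume "y \<in> range (\<lambda>x. norm (\<phi>' x))"
    then obtain x where "y = norm (\<phi>' x)" by auto
    then show "y \<le> max M' 0" using M' zero by (cases "x \<in> K") force+
  qed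
  show nb: "\<And>x. norm (\<phi>' x) \<le> (SUP x. norm (\<phi>' x))" using bdd2 by (intro cSUP_upper) auto
  show "\<bar>\<phi> x - \<phi> y\<bar> \<le> (SUP x. norm (\<phi>' x)) * norm (x - y)" for x y
  proof -
    have "norm (\<phi> x - \<phi> y) \<le> (SUP x. norm (\<phi>' x)) * norm (x - y)"
    proof (rule differentiable_bound[of UNIV])
      show "\<And>x. x \<in> UNIV \<Longrightarrow> (\<phi> has_derivative blinfun_apply (\<phi>' x)) (at x within UNIV)"
        using deriv by auto
      show "\<And>x. x \<in> UNIV \<Longrightarrow> onorm (blinfun_apply (\<phi>' x)) \<le> (SUP x. norm (\<phi>' x))"
        using nb by (simp add: norm_blinfun.rep_eq)
    qed auto
    then show ?thesis by simp
  qed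
qed

lemma phi_holder:
  fixes \<phi> :: "'a::real_normed_vector \<Rightarrow> real"
  assumes th: "0 < \<theta>" "\<theta> \<le> 1" and AB: "A \<ge> 0" "B \<ge> 0"
    and bA: "\<And>x. \<bar>\<phi> x\<bar> \<le> A" and lip: "\<And>x y. \<bar>\<phi> x - \<phi> y\<bar> \<le> B * norm (x - y)"
  shows "\<bar>\<phi> x - \<phi> y\<bar> \<le> 2 * (A + B) * norm (x - y) powr \<theta>"
proof (cases "norm (x - y) \<le> 1")
  case True
  have "norm (x - y) \<le> norm (x - y) powr \<theta>"
  proof (cases "x = y")
    case False
    then have "norm (x - y) powr 1 \<le> norm (x - y) powr \<theta>"
      using True th by (intro powr_mono') auto
    then show ?thesis using False by simp
  qed simp
  then have "B * norm (x - y) \<le> B * norm (x - y) powr \<theta>" using AB by (intro mult_left_mono) auto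
  also have "\<dots> \<le> 2 * (A + B) * norm (x - y) powr \<theta>" using AB by (intro mult_right_mono) auto
  finally show ?thesis using lip[of x y] by linarith
next
  case False
  have "1 \<le> norm (x - y) powr \<theta>" using False th by (intro ge_one_powr_ge_zero) auto
  have "\<bar>\<phi> x - \<phi> y\<bar> \<le> 2 * (A + B)" using bA[of x] bA[of y] AB by (smt (verit))
  also have "\<dots> \<le> 2 * (A + B) * norm (x - y) powr \<theta>"
    using \<open>1 \<le> _\<close> AB by (simp add: mult_le_cancel_left1)
  finally show ?thesis .
qed



theorem lemma2p2:
  fixes \<alpha> \<beta> \<theta> :: real
    and n p q :: real
  defines "n \<equiv> real DIM('a::euclidean_space) + 1"
    and "p \<equiv> 2 * (n - 1) / (n + \<alpha> - 2)"
    and "q \<equiv> 2 * n / (n - \<alpha> - 2 * \<beta>)"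
  assumes "n \<ge> 3"
    and "\<beta> \<ge> 0" and "0 < \<alpha> + \<beta>" and "\<alpha> + \<beta> < n - \<beta>"
    and "(n - \<alpha> - 2 * \<beta>) / (2 * n) + (n - \<alpha>) / (2 * (n - 1)) < 1"
    and "0 < \<theta>" and "\<theta> < min 1 (\<beta> + 1 / q)"
  shows "\<exists>C>0. \<forall>(\<phi>::'a \<Rightarrow> real) \<phi>' (f::'a \<Rightarrow> real) t.
     (\<forall>x. (\<phi> has_derivative blinfun_apply (\<phi>' x)) (at x)) \<and> continuous_on UNIV \<phi>' \<and>
     has_compact_support \<phi> \<and> in_Lp p f \<and> t > 0 \<longrightarrow>
       in_Lp q (\<lambda>x. \<phi> x * E_op \<alpha> \<beta> f x t - E_op \<alpha> \<beta> (\<lambda>y. \<phi> y * f y) x t) \<and>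
       Lp_norm q (\<lambda>x. \<phi> x * E_op \<alpha> \<beta> f x t - E_op \<alpha> \<beta> (\<lambda>y. \<phi> y * f y) x t)
         \<le> C * t powr (\<theta> - 1 / q) * C1_norm \<phi> \<phi>' * Lp_norm p f"
proof -
  note hn = assms(4) and hb = assms(5) and hab = assms(6) and hab2 = assms(7)
    and hcond = assms(8) and hth = assms(9) and hth2 = assms(10)
  define d where "d = real DIM('a)"
  have nd: "n = d + 1" unfolding n_def d_def ..
  have d2: "d \<ge> 2" using hn nd by simp
  define s where "s = (real DIM('a) + 1 - \<alpha>) / 2"
  have s_n: "2 * s = n - \<alpha>" unfolding s_def n_def by simp
  have nab: "n - \<alpha> - 2 * \<beta> > 0" using hab2 by simp
  have qpos: "q > 0" unfolding q_def using nab hn by simp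
  have iq: "1 / q = (n - \<alpha> - 2 * \<beta>) / (2 * n)" unfolding q_def by simp
  have iq_pos: "1 / q > 0" using qpos by simp
  have na: "(n - \<alpha>) / 2 = \<beta> + n / q"
  proof -
    have "n / q = n * (1 / q)" by simp
    also have "\<dots> = (n - \<alpha> - 2 * \<beta>) / 2" unfolding iq using hn by (simp add: field_simps)
    finally show ?thesis by simp
  qed
  define a where "a = 1 / q + (n - \<alpha>) / (2 * (n - 1))"
  have a1: "a < 1" using hcond unfolding a_def iq by simp
  have a0: "a > 0" unfolding a_def using iq_pos hn nab hb by (intro add_pos_pos) auto
  define r where "r = 1 / a"
  have r1: "r > 1" unfolding r_def using a0 a1 by simp
  have ir: "1 / r = a" unfolding r_def by simp
  have ip: "1 / p = (n + \<alpha> - 2) / (2 * (n - 1))" unfolding p_def by simp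
  have na2: "n + \<alpha> - 2 > 0"
  proof -
    have "(n - \<alpha>) / (2 * (n - 1)) < 1" using a1 iq_pos unfolding a_def by linarith
    then have "n - \<alpha> < 2 * (n - 1)" using hn by (simp add: field_simps)
    then show ?thesis by simp
  qed
  have p1: "p > 1"
  proof -
    have "\<alpha> < n" using hab2 hb by linarith
    then have "n + \<alpha> - 2 < 2 * (n - 1)" by simp
    then show ?thesis unfolding p_def using na2 by (simp add: field_simps)
  qed
  have pqr: "1 / p + 1 / r = 1 + 1 / q"
  proof -
    have "(n + \<alpha> - 2) / (2 * (n - 1)) + (n - \<alpha>) / (2 * (n - 1)) = ((n + \<alpha> - 2) + (n - \<alpha>)) / (2 * (n - 1))"
      by (rule add_divide_distrib[symmetric])
    also have "\<dots> = 1" using hn by simp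
    finally have e: "(n + \<alpha> - 2) / (2 * (n - 1)) + (n - \<alpha>) / (2 * (n - 1)) = 1" .
    show ?thesis unfolding ir a_def ip using e by linarith
  qed
  have da: "d * a = d * (1 / q) + (n - \<alpha>) / 2"
  proof -
    have "d * ((n - \<alpha>) / (2 * (n - 1))) = (n - \<alpha>) / 2" using nd d2 by simp
    then show ?thesis unfolding a_def by (simp add: distrib_left)
  qed
  have c0: "2 * s * r > real DIM('a)"
  proof -
    have "d / q < n / q" using qpos nd by (simp add: divide_strict_right_mono)
    also have "\<dots> \<le> (n - \<alpha>) / 2" using na hb by simp
    finally have h: "d / q < (n - \<alpha>) / 2" .
    have "d * (1 / q) = d / q" by simp
    moreover have "(n - \<alpha>) / 2 + (n - \<alpha>) / 2 = n - \<alpha>" by simp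
    ultimately have "d * (1 / q) + (n - \<alpha>) / 2 < n - \<alpha>" using h by linarith
    then have "d * a < n - \<alpha>" unfolding da by simp
    then have "d < (n - \<alpha>) * r" unfolding r_def using a0 by (simp add: field_simps)
    then show ?thesis using s_n unfolding d_def by (simp add: mult.commute)
  qed
  have cth: "(2 * s - \<theta>) * r > real DIM('a)"
  proof -
    have "\<theta> < \<beta> + 1 / q" using hth2 by simp
    moreover have nq: "n / q = d / q + 1 / q" unfolding nd by (simp add: add_divide_distrib)
    ultimately have "d / q < (n - \<alpha>) / 2 - \<theta>" using na by linarith
    moreover have "d * (1 / q) = d / q" by simp
    moreover have "(n - \<alpha>) / 2 + (n - \<alpha>) / 2 = n - \<alpha>" by simp
    ultimately have "d * (1 / q) + (n - \<alpha>) / 2 < n - \<alpha> - \<theta>" by linarith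
    then have "d * a < n - \<alpha> - \<theta>" unfolding da by simp
    then have "d < (n - \<alpha> - \<theta>) * r" unfolding r_def using a0 by (simp add: field_simps)
    then show ?thesis using s_n unfolding d_def by simp
  qed
  have expo: "d + r * (\<theta> + \<beta> - 2 * s) = r * (\<theta> - 1 / q)"
  proof -
    have "d * a + (\<theta> + \<beta> - 2 * s) = \<theta> - 1 / q"
    proof -
      have nq: "n / q = d / q + 1 / q" unfolding nd by (simp add: add_divide_distrib)
      have "d * (1 / q) = d / q" by simp
      moreover have "(n - \<alpha>) / 2 + (n - \<alpha>) / 2 = n - \<alpha>" by simp
      ultimately show ?thesis unfolding da s_n using na nq by linarith
    qed
    then have "r * (d * a + (\<theta> + \<beta> - 2 * s)) = r * (\<theta> - 1 / q)" by simp
    moreover have "r * (d * a) = d" unfolding r_def using a0 by simp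
    ultimately show ?thesis by (simp add: distrib_left)
  qed
  define J where "J = enn2real (\<integral>\<^sup>+w. ennreal ((norm (w::'a) powr \<theta> / (1 + (norm w)\<^sup>2) powr s) powr r) \<partial>lborel)"
  have r0: "r > 0" using r1 by simp
  have th0: "\<theta> \<ge> 0" using hth by simp
  have th1: "\<theta> \<le> 1" using hth2 by simp
  have Jfin: "(\<integral>\<^sup>+w. ennreal ((norm (w::'a) powr \<theta> / (1 + (norm w)\<^sup>2) powr s) powr r) \<partial>lborel) = ennreal J"
    using kernelJ_finite[where 'a='a, OF r0 th0 cth] unfolding J_def by (simp add: less_top)
  have J0: "J \<ge> 0" unfolding J_def by simp
  define C where "C = 2 * J powr (1 / r) + 1"
  have C0: "C > 0" unfolding C_def by (simp add: add_nonneg_pos)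
  show ?thesis
  proof (rule exI[of _ C], rule conjI[OF C0], intro allI impI)
    fix \<phi> :: "'a \<Rightarrow> real" and \<phi>' and f :: "'a \<Rightarrow> real" and t :: real
    assume H: "(\<forall>x. (\<phi> has_derivative blinfun_apply (\<phi>' x)) (at x)) \<and> continuous_on UNIV \<phi>' \<and>
      has_compact_support \<phi> \<and> in_Lp p f \<and> t > 0"
    then have deriv: "\<forall>x. (\<phi> has_derivative blinfun_apply (\<phi>' x)) (at x)"
      and cont: "continuous_on UNIV \<phi>'" and supp: "has_compact_support \<phi>"
      and fLp: "in_Lp p f" and t: "t > 0" by auto
    define A where "A = (SUP x. \<bar>\<phi> x\<bar>)"
    define B where "B = (SUP x. norm (\<phi>' x))"
    note pf = phi_facts[OF deriv cont supp]
    have phim[measurable]: "\<phi> \<in> borel_measurable borel" by (rule pf(1))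
    have bA: "\<And>x. \<bar>\<phi> x\<bar> \<le> A" unfolding A_def by (rule pf(2))
    have bB: "\<And>x. norm (\<phi>' x) \<le> B" unfolding B_def by (rule pf(3))
    have lip: "\<And>x y. \<bar>\<phi> x - \<phi> y\<bar> \<le> B * norm (x - y)" unfolding B_def by (rule pf(4))
    have A0: "A \<ge> 0" using bA[of 0] by linarith
    have B0: "B \<ge> 0" using bB[of 0] norm_ge_zero[of "\<phi>' 0"] by linarith
    have C1: "C1_norm \<phi> \<phi>' = A + B" unfolding C1_norm_def A_def B_def ..
    have hold: "\<And>x y. \<bar>\<phi> x - \<phi> y\<bar> \<le> 2 * (A + B) * norm (x - y) powr \<theta>"
      by (rule phi_holder[OF hth th1 A0 B0 bA lip])
    have fm: "f \<in> borel_measurable lebesgue" and ffin: "(\<integral>\<^sup>+x. ennreal (\<bar>f x\<bar> powr p) \<partial>lebesgue) < \<infinity>"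
      using fLp unfolding in_Lp_def by auto
    obtain g where gm: "g \<in> borel_measurable lborel" and fg: "AE x in lborel. f x = g x"
      using completion_ex_borel_measurable_real[OF fm] by auto
    have gmb[measurable]: "g \<in> borel_measurable borel" using gm by simp
    have fgI: "(\<integral>\<^sup>+x. ennreal (\<bar>f x\<bar> powr p) \<partial>lebesgue) = (\<integral>\<^sup>+x. ennreal (\<bar>g x\<bar> powr p) \<partial>lborel)"
      unfolding nn_integral_completion
      by (rule nn_integral_cong_AE) (use fg in \<open>auto elim!: eventually_mono\<close>)
    define GP where "GP = enn2real (\<integral>\<^sup>+x. ennreal (\<bar>g x\<bar> powr p) \<partial>lborel)"
    have IG: "(\<integral>\<^sup>+x. ennreal (\<bar>g x\<bar> powr p) \<partial>lborel) = ennreal GP"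
      using ffin unfolding fgI GP_def by (simp add: less_top)
    have GP0: "GP \<ge> 0" unfolding GP_def by simp
    have Lpf: "Lp_norm p f = GP powr (1 / p)"
      unfolding Lp_norm_def fgI GP_def ..
    define K0 where "K0 z = t powr \<beta> / (t\<^sup>2 + (norm z)\<^sup>2) powr s" for z :: 'a
    define Kt where "Kt z = norm z powr \<theta> * t powr \<beta> / (t\<^sup>2 + (norm z)\<^sup>2) powr s" for z :: 'a
    have K0m[measurable]: "K0 \<in> borel_measurable borel" unfolding K0_def by measurable
    have Ktm[measurable]: "Kt \<in> borel_measurable borel" unfolding Kt_def by measurable
    have K0nn: "\<And>z. K0 z \<ge> 0" unfolding K0_def by simp
    have Ktnn: "\<And>z. Kt z \<ge> 0" unfolding Kt_def by simp
    have KtK0: "\<And>z. Kt z = norm z powr \<theta> * K0 z" unfolding Kt_def K0_def by simp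
    define KR0 where "KR0 = enn2real (\<integral>\<^sup>+z. ennreal (K0 z powr r) \<partial>lborel)"
    have IK0: "(\<integral>\<^sup>+z. ennreal (K0 z powr r) \<partial>lborel) = ennreal KR0"
      using kernel0_finite[where 'a='a, OF t r0 c0, of \<beta>] unfolding KR0_def K0_def by (simp add: less_top)
    have KR00: "KR0 \<ge> 0" unfolding KR0_def by simp
    define KRt where "KRt = t powr (r * (\<theta> - 1 / q)) * J"
    have IKt: "(\<integral>\<^sup>+z. ennreal (Kt z powr r) \<partial>lborel) = ennreal KRt"
      using kernel_scale[OF t Jfin, of \<beta>] unfolding Kt_def KRt_def expo[unfolded d_def] .
    have KRt0: "KRt \<ge> 0" unfolding KRt_def using J0 by simp
    have gabs[measurable]: "(\<lambda>y. \<bar>g y\<bar>) \<in> borel_measurable borel" by measurable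
    note Y0 = young[where k=K0 and g="\<lambda>y. \<bar>g y\<bar>" and p=p and r=r and q=q and KR=KR0 and GP=GP,
        OF K0m gabs K0nn abs_ge_zero p1 r1 qpos pqr IK0 _ KR00 GP0]
    note Yt = young[where k=Kt and g="\<lambda>y. \<bar>g y\<bar>" and p=p and r=r and q=q and KR=KRt and GP=GP,
        OF Ktm gabs Ktnn abs_ge_zero p1 r1 qpos pqr IKt _ KRt0 GP0]
    define h0 where "h0 x = (\<integral>\<^sup>+y. ennreal (K0 (x - y) * \<bar>g y\<bar>) \<partial>lborel)" for x
    define ht where "ht x = (\<integral>\<^sup>+y. ennreal (Kt (x - y) * \<bar>g y\<bar>) \<partial>lborel)" for x
    have AE0: "AE x in lborel. h0 x < \<infinity>" unfolding h0_def using Y0(1) IG by simp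
    have AEt: "AE x in lborel. ht x < \<infinity>" unfolding ht_def using Yt(1) IG by simp
    have Ltq: "(\<integral>\<^sup>+x. ennreal (enn2real (ht x) powr q) \<partial>lborel) \<le> ennreal (KRt powr (q / r) * GP powr (q / p))"
      unfolding ht_def using Yt(2) IG by simp
    have Kfun: "(\<lambda>y. t powr \<beta> * u y / (t\<^sup>2 + (norm (x - y))\<^sup>2) powr s) = (\<lambda>y. u y * K0 (x - y))"
      for u :: "'a \<Rightarrow> real" and x unfolding K0_def by auto
    have Econv: "E_op \<alpha> \<beta> u x t = (\<integral>y. v y * K0 (x - y) \<partial>lborel)"
      if um: "u \<in> borel_measurable lebesgue" and vm: "v \<in> borel_measurable borel"
        and uv: "AE y in lborel. u y = v y" for u v :: "'a \<Rightarrow> real" and x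
    proof -
      have K0x[measurable]: "(\<lambda>y. K0 (x - y)) \<in> borel_measurable borel" by measurable
      have K0xl: "(\<lambda>y. K0 (x - y)) \<in> borel_measurable lebesgue"
        by (rule measurable_completion) simp
      have vl: "v \<in> borel_measurable lebesgue" by (rule measurable_completion) (use vm in simp)
      have "E_op \<alpha> \<beta> u x t = (\<integral>y. u y * K0 (x - y) \<partial>lebesgue)"
        unfolding E_op_def s_def[symmetric] Kfun ..
      also have "\<dots> = (\<integral>y. v y * K0 (x - y) \<partial>lebesgue)"
      proof (rule integral_cong_AE)
        show "(\<lambda>y. u y * K0 (x - y)) \<in> borel_measurable lebesgue" using um K0xl by measurable
        show "(\<lambda>y. v y * K0 (x - y)) \<in> borel_measurable lebesgue" using vl K0xl by measurable
        show "AE y in lebesgue. u y * K0 (x - y) = v y * K0 (x - y)"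
          using AE_completion[OF uv] by (auto elim!: eventually_mono)
      qed
      also have "\<dots> = (\<integral>y. v y * K0 (x - y) \<partial>lborel)"
        by (rule integral_completion) (simp add: borel_measurable_times[OF vm K0x])
      finally show ?thesis .
    qed
    have E1: "E_op \<alpha> \<beta> f x t = (\<integral>y. g y * K0 (x - y) \<partial>lborel)" for x
      by (rule Econv[OF fm gmb fg])
    have E2: "E_op \<alpha> \<beta> (\<lambda>y. \<phi> y * f y) x t = (\<integral>y. \<phi> y * g y * K0 (x - y) \<partial>lborel)" for x
    proof -
      have "E_op \<alpha> \<beta> (\<lambda>y. \<phi> y * f y) x t = (\<integral>y. (\<phi> y * g y) * K0 (x - y) \<partial>lborel)"
      proof (rule Econv)
        have "\<phi> \<in> borel_measurable lebesgue" by (rule measurable_completion) simp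
        then show "(\<lambda>y. \<phi> y * f y) \<in> borel_measurable lebesgue" using fm by measurable
        show "(\<lambda>y. \<phi> y * g y) \<in> borel_measurable borel" by measurable
        show "AE y in lborel. \<phi> y * f y = \<phi> y * g y" using fg by (auto elim!: eventually_mono)
      qed
      then show ?thesis by simp
    qed
    define Comm where "Comm x = \<phi> x * E_op \<alpha> \<beta> f x t - E_op \<alpha> \<beta> (\<lambda>y. \<phi> y * f y) x t" for x
    have Commeq: "Comm = (\<lambda>x. \<phi> x * (\<integral>y. g y * K0 (x - y) \<partial>lborel) - (\<integral>y. \<phi> y * g y * K0 (x - y) \<partial>lborel))"
      unfolding Comm_def E1 E2 ..
    have Commm: "Comm \<in> borel_measurable lebesgue"
      unfolding Commeq by (rule measurable_completion) measurable
    have ptb: "\<bar>Comm x\<bar> \<le> 2 * (A + B) * enn2real (ht x)" if h0x: "h0 x < \<infinity>" and htx: "ht x < \<infinity>" for x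
    proof -
      have i1: "integrable lborel (\<lambda>y. g y * K0 (x - y))"
      proof (rule integrableI_bounded)
        show "(\<lambda>y. g y * K0 (x - y)) \<in> borel_measurable lborel" by measurable
        have "(\<integral>\<^sup>+y. ennreal (norm (g y * K0 (x - y))) \<partial>lborel) = h0 x"
          unfolding h0_def using K0nn by (intro nn_integral_cong) (simp add: abs_mult mult.commute)
        then show "(\<integral>\<^sup>+y. ennreal (norm (g y * K0 (x - y))) \<partial>lborel) < \<infinity>" using h0x by simp
      qed
      have i2: "integrable lborel (\<lambda>y. \<phi> y * g y * K0 (x - y))"
      proof (rule integrableI_bounded)
        show "(\<lambda>y. \<phi> y * g y * K0 (x - y)) \<in> borel_measurable lborel" by measurable
        have "(\<integral>\<^sup>+y. ennreal (norm (\<phi> y * g y * K0 (x - y))) \<partial>lborel)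
            \<le> (\<integral>\<^sup>+y. ennreal A * ennreal (K0 (x - y) * \<bar>g y\<bar>) \<partial>lborel)"
        proof (intro nn_integral_mono)
          fix y
          have "norm (\<phi> y * g y * K0 (x - y)) = \<bar>\<phi> y\<bar> * (K0 (x - y) * \<bar>g y\<bar>)"
            using K0nn by (simp add: abs_mult)
          also have "\<dots> \<le> A * (K0 (x - y) * \<bar>g y\<bar>)"
            using bA K0nn by (intro mult_right_mono) auto
          finally show "ennreal (norm (\<phi> y * g y * K0 (x - y))) \<le> ennreal A * ennreal (K0 (x - y) * \<bar>g y\<bar>)"
            using A0 by (subst ennreal_mult'[symmetric]) (auto intro: ennreal_leI)
        qed
        also have "\<dots> = ennreal A * h0 x" unfolding h0_def by (simp add: nn_integral_cmult)
        also have "\<dots> < \<infinity>" using h0x by (simp add: ennreal_mult_less_top)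
        finally show "(\<integral>\<^sup>+y. ennreal (norm (\<phi> y * g y * K0 (x - y))) \<partial>lborel) < \<infinity>" .
      qed
      have "Comm x = (\<integral>y. \<phi> x * (g y * K0 (x - y)) \<partial>lborel) - (\<integral>y. \<phi> y * g y * K0 (x - y) \<partial>lborel)"
        unfolding Commeq by simp
      also have "\<dots> = (\<integral>y. \<phi> x * (g y * K0 (x - y)) - \<phi> y * g y * K0 (x - y) \<partial>lborel)"
      proof -
        have i1': "integrable lborel (\<lambda>y. \<phi> x * (g y * K0 (x - y)))" using i1 by (rule integrable_mult_right)
        show ?thesis using i1' i2 by simp
      qed
      also have "\<dots> = (\<integral>y. (\<phi> x - \<phi> y) * g y * K0 (x - y) \<partial>lborel)"
        by (simp add: algebra_simps)
      finally have ceq: "Comm x = (\<integral>y. (\<phi> x - \<phi> y) * g y * K0 (x - y) \<partial>lborel)" .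
      have "ennreal \<bar>Comm x\<bar> \<le> (\<integral>\<^sup>+y. ennreal (norm ((\<phi> x - \<phi> y) * g y * K0 (x - y))) \<partial>lborel)"
        unfolding ceq using integral_norm_bound_ennreal[of lborel "\<lambda>y. (\<phi> x - \<phi> y) * g y * K0 (x - y)"]
          i1 i2 by (simp add: algebra_simps)
      also have "\<dots> \<le> (\<integral>\<^sup>+y. ennreal (2 * (A + B)) * ennreal (Kt (x - y) * \<bar>g y\<bar>) \<partial>lborel)"
      proof (intro nn_integral_mono)
        fix y
        have "norm ((\<phi> x - \<phi> y) * g y * K0 (x - y)) = \<bar>\<phi> x - \<phi> y\<bar> * (K0 (x - y) * \<bar>g y\<bar>)"
          using K0nn by (simp add: abs_mult)
        also have "\<dots> \<le> (2 * (A + B) * norm (x - y) powr \<theta>) * (K0 (x - y) * \<bar>g y\<bar>)"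
          using hold K0nn by (intro mult_right_mono) auto
        also have "\<dots> = 2 * (A + B) * (Kt (x - y) * \<bar>g y\<bar>)" unfolding KtK0 by simp
        finally show "ennreal (norm ((\<phi> x - \<phi> y) * g y * K0 (x - y))) \<le> ennreal (2 * (A + B)) * ennreal (Kt (x - y) * \<bar>g y\<bar>)"
          using A0 B0 by (subst ennreal_mult'[symmetric]) (auto intro: ennreal_leI)
      qed
      also have "\<dots> = ennreal (2 * (A + B)) * ht x" unfolding ht_def by (simp add: nn_integral_cmult)
      also have "\<dots> = ennreal (2 * (A + B) * enn2real (ht x))"
        using htx A0 B0 by (simp add: ennreal_mult less_top)
      finally show ?thesis using A0 B0 by (simp add: ennreal_le_iff)
    qed
    have AEb: "AE x in lborel. \<bar>Comm x\<bar> \<le> 2 * (A + B) * enn2real (ht x)"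
      using AE0 AEt by eventually_elim (rule ptb)
    define Z where "Z = (2 * (A + B)) powr q * (KRt powr (q / r) * GP powr (q / p))"
    have Z0: "Z \<ge> 0" unfolding Z_def by simp
    have Ib: "(\<integral>\<^sup>+x. ennreal (\<bar>Comm x\<bar> powr q) \<partial>lebesgue) \<le> ennreal Z"
    proof -
      have "(\<integral>\<^sup>+x. ennreal (\<bar>Comm x\<bar> powr q) \<partial>lebesgue) = (\<integral>\<^sup>+x. ennreal (\<bar>Comm x\<bar> powr q) \<partial>lborel)"
        by (rule nn_integral_completion)
      also have "\<dots> \<le> (\<integral>\<^sup>+x. ennreal ((2 * (A + B)) powr q) * ennreal (enn2real (ht x) powr q) \<partial>lborel)"
      proof (rule nn_integral_mono_AE)
        show "AE x in lborel. ennreal (\<bar>Comm x\<bar> powr q) \<le> ennreal ((2 * (A + B)) powr q) * ennreal (enn2real (ht x) powr q)"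
          using AEb
        proof (rule eventually_mono)
          fix x assume le: "\<bar>Comm x\<bar> \<le> 2 * (A + B) * enn2real (ht x)"
          have "\<bar>Comm x\<bar> powr q \<le> (2 * (A + B) * enn2real (ht x)) powr q"
            using le qpos by (intro powr_mono2) auto
          also have "\<dots> = (2 * (A + B)) powr q * enn2real (ht x) powr q"
            using A0 B0 by (simp add: powr_mult)
          finally show "ennreal (\<bar>Comm x\<bar> powr q) \<le> ennreal ((2 * (A + B)) powr q) * ennreal (enn2real (ht x) powr q)"
            by (subst ennreal_mult'[symmetric]) (auto intro: ennreal_leI)
        qed
      qed
      also have "\<dots> = ennreal ((2 * (A + B)) powr q) * (\<integral>\<^sup>+x. ennreal (enn2real (ht x) powr q) \<partial>lborel)"
      proof -
        have htm[measurable]: "ht \<in> borel_measurable lborel" unfolding ht_def by measurable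
        show ?thesis by (rule nn_integral_cmult) measurable
      qed
      also have "\<dots> \<le> ennreal ((2 * (A + B)) powr q) * ennreal (KRt powr (q / r) * GP powr (q / p))"
        by (intro mult_left_mono Ltq) simp
      also have "\<dots> = ennreal Z" unfolding Z_def by (simp add: ennreal_mult')
      finally show ?thesis .
    qed
    have inq: "in_Lp q Comm"
      unfolding in_Lp_def using Commm Ib by (auto simp: le_less_trans)
    have "Lp_norm q Comm \<le> Z powr (1 / q)"
    proof -
      have "enn2real (\<integral>\<^sup>+x. ennreal (\<bar>Comm x\<bar> powr q) \<partial>lebesgue) \<le> Z"
        using Ib Z0 by (intro enn2real_leI) auto
      then show ?thesis unfolding Lp_norm_def using qpos by (intro powr_mono2) auto
    qed
    also have "Z powr (1 / q) = 2 * (A + B) * (KRt powr (1 / r) * GP powr (1 / p))"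
    proof -
      have "Z powr (1 / q) = ((2 * (A + B)) powr q) powr (1 / q) * ((KRt powr (q / r)) powr (1 / q) * (GP powr (q / p)) powr (1 / q))"
        unfolding Z_def by (simp add: powr_mult)
      also have "\<dots> = (2 * (A + B)) powr 1 * (KRt powr (1 / r) * GP powr (1 / p))"
        using qpos by (simp add: powr_powr)
      also have "(2 * (A + B)) powr 1 = 2 * (A + B)" using A0 B0 by simp
      finally show ?thesis .
    qed
    also have "KRt powr (1 / r) = t powr (\<theta> - 1 / q) * J powr (1 / r)"
    proof -
      have "KRt powr (1 / r) = (t powr (r * (\<theta> - 1 / q))) powr (1 / r) * J powr (1 / r)"
        unfolding KRt_def using J0 by (simp add: powr_mult)
      also have "(t powr (r * (\<theta> - 1 / q))) powr (1 / r) = t powr (\<theta> - 1 / q)"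
        using r0 by (simp add: powr_powr)
      finally show ?thesis .
    qed
    also have "2 * (A + B) * (t powr (\<theta> - 1 / q) * J powr (1 / r) * GP powr (1 / p))
        = (2 * J powr (1 / r)) * (t powr (\<theta> - 1 / q) * (A + B) * GP powr (1 / p))"
      by (simp add: algebra_simps)
    also have "\<dots> \<le> C * (t powr (\<theta> - 1 / q) * (A + B) * GP powr (1 / p))"
      unfolding C_def using A0 B0 by (intro mult_right_mono) auto
    finally have fin: "Lp_norm q Comm \<le> C * t powr (\<theta> - 1 / q) * C1_norm \<phi> \<phi>' * Lp_norm p f"
      unfolding C1 Lpf by (simp add: mult.assoc)
    show "in_Lp q (\<lambda>x. \<phi> x * E_op \<alpha> \<beta> f x t - E_op \<alpha> \<beta> (\<lambda>y. \<phi> y * f y) x t) \<and>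
       Lp_norm q (\<lambda>x. \<phi> x * E_op \<alpha> \<beta> f x t - E_op \<alpha> \<beta> (\<lambda>y. \<phi> y * f y) x t)
         \<le> C * t powr (\<theta> - 1 / q) * C1_norm \<phi> \<phi>' * Lp_norm p f"
      using inq fin unfolding Comm_def[abs_def] by simp
  qed
qed

end
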